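(* Let $a_1,\dots,a_n$ be positive integers with $\sum_i a_i<2^{4n}$, and let $b\in(0,1)$ be a constant. Let $V$ be any subset of $\{v\in\mathbb N:\exists S\subseteq[n],\ \Sigma(S)=v\}$ with $|V|\ge 2^{(1-\ell)n}$ for some $\ell\in[0,1]$. Let $p$ be a uniformly random prime in $[2^{bn},2^{bn+1}]$, $k$ a uniformly random integer in $\{0,\dots,p-1\}$, and $v_{p,k}=|\{v\in V: v\equiv k\pmod p\}|$. Then, for $n$ large enough, $\Pr_{p,k}[v_{p,k}\ge 2^{(1-\ell-b)n-2}]=\Omega(1/n)$ if $\ell\le 1-b$, and $\Pr_{p,k}[v_{p,k}\ge1]=\Omega(\min(1/n,2^{(1-\ell-b)n}))$ if $\ell>1-b$. *)

theory Defs
  imports "HOL-Probability.Probability_Mass_Function" "HOL-Computational_Algebra.Primes"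
begin

definition subset_sums :: "(nat \<Rightarrow> nat) \<Rightarrow> nat \<Rightarrow> nat set" where
  "subset_sums a n = {v. \<exists>S. S \<subseteq> {1..n} \<and> (\<Sum>i\<in>S. a i) = v}"

definition primes_in :: "real \<Rightarrow> nat \<Rightarrow> nat set" where
  "primes_in b n = {p::nat. prime p \<and> 2 powr (b * real n) \<le> real p \<and> real p \<le> 2 powr (b * real n + 1)}"

definition residue_count :: "nat set \<Rightarrow> nat \<Rightarrow> nat \<Rightarrow> nat" where
  "residue_count V p k = card {v \<in> V. v mod p = k mod p}"

definition pk_pmf :: "real \<Rightarrow> nat \<Rightarrow> (nat \<times> nat) pmf" where
  "pk_pmf b n = bind_pmf (pmf_of_set (primes_in b n))
      (\<lambda>p. map_pmf (\<lambda>k. (p, k)) (pmf_of_set {0..<p}))"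

end

theory Submission
  imports Defs "HOL-Real_Asymp.Real_Asymp" "HOL-Analysis.Analysis"
begin


definition primorial :: "nat \<Rightarrow> nat" where
  "primorial x = \<Prod>{p. prime p \<and> p \<le> x}"

lemma finite_primes_le: "finite {p::nat. prime p \<and> p \<le> x}"
  by (rule finite_subset[of _ "{..x}"]) auto

lemma primes_dvd_prod_dvd:
  fixes n :: nat
  assumes "n > 0" "finite Q" "\<forall>p\<in>Q. prime p \<and> p dvd n"
  shows "\<Prod>Q dvd n"
proof -
  have sub: "Q \<subseteq> prime_factors n" using assms by (auto simp: prime_factors_dvd)
  have "\<Prod>Q dvd (\<Prod>p\<in>prime_factors n. p)"
    by (rule prod_dvd_prod_subset) (use sub in auto)
  also have "\<dots> dvd (\<Prod>p\<in>prime_factors n. p ^ multiplicity p n)"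
  proof (rule prod_dvd_prod)
    fix p assume "p \<in> prime_factors n"
    hence "multiplicity p n > 0" using assms(1) by (simp add: prime_factors_multiplicity)
    thus "p dvd p ^ multiplicity p n" by (simp add: dvd_power)
  qed
  also have "\<dots> = n" using assms(1) prime_factorization_nat[of n] by simp
  finally show ?thesis .
qed

lemma choose_odd_le: "(2*k+1) choose k \<le> 4^k"
proof -
  have "2 * ((2*k+1) choose k) = ((2*k+1) choose k) + ((2*k+1) choose (k+1))"
    using binomial_symmetric[of k "2*k+1"] by simp
  also have "\<dots> = (\<Sum>i\<in>{k,k+1}. (2*k+1) choose i)" by simp
  also have "\<dots> \<le> (\<Sum>i\<le>2*k+1. (2*k+1) choose i)"
    by (rule sum_mono2) auto
  also have "\<dots> = 2^(2*k+1)" by (rule choose_row_sum)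
  also have "\<dots> = 2 * 4^k" by (simp add: power_mult power_add)
  finally show ?thesis by simp
qed

lemma primorial_le: "primorial x \<le> 4 ^ x"
proof (induction x rule: less_induct)
  case (less x)
  show ?case
  proof (cases "x \<le> 2")
    case True
    then consider "x \<le> 1" | "x = 2" by linarith
    then show ?thesis
    proof cases
      case 1
      hence e: "{p::nat. prime p \<and> p \<le> x} = {}" by (auto dest: prime_gt_1_nat)
      show ?thesis unfolding primorial_def e by simp
    next
      case 2
      have e: "{p::nat. prime p \<and> p \<le> x} = {2}"
        using prime_ge_2_nat 2 by (auto intro: antisym)
      show ?thesis unfolding primorial_def e using 2 by simp
    qed
  next
    case False
    show ?thesis
    proof (cases "even x")
      case True
      then have "\<not> prime x" using False prime_odd_nat by fastforce
      then have "{p. prime p \<and> p \<le> x} = {p. prime p \<and> p \<le> x - 1}" using False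
      proof -
        have "prime p \<and> p \<le> x \<longleftrightarrow> prime p \<and> p \<le> x - 1" for p
          using \<open>\<not> prime x\<close> False by (cases "p = x") auto
        thus ?thesis by blast
      qed
      then have "primorial x = primorial (x - 1)" by (simp add: primorial_def)
      also have "\<dots> \<le> 4 ^ (x - 1)" using less False by simp
      also have "\<dots> \<le> 4 ^ x" by (rule power_increasing) auto
      finally show ?thesis .
    next
      case odd: False
      then obtain k where x: "x = 2*k+1" by (metis oddE)
      with False have k: "k \<ge> 1" by simp
      define A where "A = {p::nat. prime p \<and> p \<le> k+1}"
      define B where "B = {p::nat. prime p \<and> k+1 < p \<and> p \<le> 2*k+1}"
      have AB: "{p. prime p \<and> p \<le> x} = A \<union> B" "A \<inter> B = {}"
        by (auto simp: A_def B_def x)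
      have fA: "finite A" by (simp add: A_def finite_primes_le)
      have fB: "finite B" by (rule finite_subset[of _ "{..2*k+1}"]) (auto simp: B_def)
      have "\<Prod>B dvd (2*k+1) choose k"
      proof (rule primes_dvd_prod_dvd[OF _ fB], simp, intro ballI conjI)
        fix p assume p: "p \<in> B"
        then show pr: "prime p" by (simp add: B_def)
        have "p dvd fact (2*k+1)" using p pr by (intro prime_dvd_fact_iff[THEN iffD2]) (auto simp: B_def)
        also have "fact (2*k+1) = fact k * fact (k+1) * ((2*k+1) choose k)"
          using binomial_fact_lemma[of k "2*k+1"] by (simp add: mult.commute)
        finally have "p dvd fact k * fact (k+1) * ((2*k+1) choose k)" .
        moreover have "\<not> p dvd fact k" using p by (subst prime_dvd_fact_iff[OF pr]) (auto simp: B_def)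
        moreover have "\<not> p dvd fact (k+1)" using p by (subst prime_dvd_fact_iff[OF pr]) (auto simp: B_def)
        ultimately show "p dvd (2*k+1) choose k"
          using pr by (auto simp: prime_dvd_mult_iff)
      qed
      then have "\<Prod>B \<le> (2*k+1) choose k"
        by (rule dvd_imp_le) simp
      also have "\<dots> \<le> 4^k" by (rule choose_odd_le)
      finally have B4: "\<Prod>B \<le> 4^k" .
      have "primorial x = \<Prod>A * \<Prod>B"
        unfolding primorial_def AB by (rule prod.union_disjoint[OF fA fB AB(2)])
      also have "\<Prod>A = primorial (k+1)" by (simp add: A_def primorial_def)
      also have "primorial (k+1) \<le> 4^(k+1)" by (rule less.IH) (use x k in simp)
      hence "primorial (k+1) * \<Prod>B \<le> 4^(k+1) * 4^k" using B4 by (intro mult_mono) auto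
      also have "4^(k+1) * 4^k = (4::nat)^x" by (simp add: x power_add[symmetric])
      finally show ?thesis by simp
    qed
  qed
qed

lemma mult_le_bound:
  fixes p x :: nat
  assumes "prime p" "x > 0"
  shows "multiplicity p x < x"
proof -
  have "p ^ multiplicity p x dvd x" by (rule multiplicity_dvd)
  hence "p ^ multiplicity p x \<le> x" using assms by (intro dvd_imp_le) auto
  moreover have "multiplicity p x < 2 ^ multiplicity p x" by (rule less_exp)
  moreover have "2 ^ multiplicity p x \<le> p ^ multiplicity p x"
    using prime_ge_2_nat[OF assms(1)] by (intro power_mono) auto
  ultimately show ?thesis by linarith
qed

lemma mult_set:
  fixes p x :: nat
  assumes "prime p" "x > 0" "x \<le> N"
  shows "{j\<in>{1..N}. p ^ j dvd x} = {1..multiplicity p x}"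
proof -
  have A: "multiplicity p x \<le> N" using mult_le_bound[OF assms(1,2)] assms(3) by simp
  have B: "p ^ j dvd x \<longleftrightarrow> j \<le> multiplicity p x" for j
    using assms by (intro power_dvd_iff_le_multiplicity) auto
  have "j \<in> {j\<in>{1..N}. p ^ j dvd x} \<longleftrightarrow> j \<in> {1..multiplicity p x}" for j
    unfolding B using A by auto
  thus ?thesis by blast
qed

lemma legendre:
  fixes p :: nat
  assumes "prime p"
  shows "n \<le> N \<Longrightarrow> multiplicity p (fact n) = (\<Sum>j\<in>{1..N}. n div p ^ j)"
proof (induction n)
  case 0
  then show ?case by simp
next
  case (Suc n)
  have pos: "p ^ j > 0" for j using prime_gt_0_nat[OF assms] by simp
  have "multiplicity p (fact (Suc n) :: nat) = multiplicity p (Suc n * fact n)"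
    by (simp add: fact_Suc)
  also have "\<dots> = multiplicity p (Suc n) + multiplicity p (fact n :: nat)"
    by (rule prime_elem_multiplicity_mult_distrib) (use assms in auto)
  also have "multiplicity p (Suc n) = card {j\<in>{1..N}. p ^ j dvd Suc n}"
    using mult_set[OF assms, of "Suc n" N] Suc.prems by simp
  also have "\<dots> = (\<Sum>j\<in>{1..N}. if p ^ j dvd Suc n then 1 else 0)"
    by (simp add: sum.If_cases Int_def conj_commute)
  also have "multiplicity p (fact n :: nat) = (\<Sum>j\<in>{1..N}. n div p ^ j)"
    using Suc by simp
  also have "(\<Sum>j\<in>{1..N}. if p ^ j dvd Suc n then 1 else 0) + (\<Sum>j\<in>{1..N}. n div p ^ j)
      = (\<Sum>j\<in>{1..N}. Suc n div p ^ j)"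
  proof (subst sum.distrib[symmetric], rule sum.cong[OF refl])
    fix j
    show "(if p ^ j dvd Suc n then 1 else 0) + n div p ^ j = Suc n div p ^ j"
      unfolding div_Suc[of n "p^j"] dvd_eq_mod_eq_0 by simp
  qed
  finally show ?case .
qed

lemma div2_eq:
  assumes "q > (0::nat)"
  shows "2*m div q = 2*(m mod q) div q + 2*(m div q)"
proof -
  have e: "2*m = 2*(m mod q) + (2*(m div q))*q"
    using mod_div_mult_eq[of m q] by linarith
  show ?thesis by (subst e) (simp add: assms)
qed

lemma div2_le: "2*m div q \<le> 2*(m div q) + (1::nat)"
proof (cases "q = 0")
  case False
  have "2*(m mod q) < 2*q" using False by simp
  hence "2*(m mod q) div q < 2" using False by (simp add: div_less_iff_less_mult)
  thus ?thesis using div2_eq[of q m] False by simp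
qed simp

lemma div2_ge: "2*(m div q) \<le> 2*m div (q::nat)"
proof (cases "q = 0")
  case False
  thus ?thesis using div2_eq[of q m] by linarith
qed simp

lemma mult_central:
  fixes p m :: nat
  assumes "prime p"
  shows "multiplicity p ((2*m) choose m) = (\<Sum>j\<in>{1..2*m}. 2*m div p^j - 2*(m div p^j))"
proof -
  have f: "fact (2*m) = fact m * fact m * ((2*m) choose m)"
    using binomial_fact_lemma[of m "2*m"] by (simp add: mult_2)
  have "multiplicity p (fact (2*m) :: nat) = 2 * multiplicity p (fact m :: nat) + multiplicity p ((2*m) choose m)"
    unfolding f using assms
    by (simp add: prime_elem_multiplicity_mult_distrib)
  moreover have "multiplicity p (fact (2*m) :: nat) = (\<Sum>j\<in>{1..2*m}. 2*m div p^j)"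
    using legendre[OF assms] by simp
  moreover have "multiplicity p (fact m :: nat) = (\<Sum>j\<in>{1..2*m}. m div p^j)"
    using legendre[OF assms] by simp
  moreover have "(\<Sum>j\<in>{1..2*m}. 2*m div p^j - 2*(m div p^j)) = 
       (\<Sum>j\<in>{1..2*m}. 2*m div p^j) - (\<Sum>j\<in>{1..2*m}. 2*(m div p^j))"
    by (rule sum_subtractf_nat) (simp add: div2_ge)
  ultimately show ?thesis by (simp add: sum_distrib_left)
qed

lemma central_pow_le:
  fixes p m :: nat
  assumes "prime p" "m \<ge> 1"
  shows "p ^ multiplicity p ((2*m) choose m) \<le> 2*m"
proof (rule ccontr)
  define t where "t = multiplicity p ((2*m) choose m)"
  assume "\<not> p ^ multiplicity p ((2*m) choose m) \<le> 2*m"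
  hence big: "p ^ t > 2*m" by (simp add: t_def)
  have t1: "t \<ge> 1" using big assms by (cases t) auto
  have p1: "p > 1" using prime_gt_1_nat[OF assms(1)] .
  have "t = (\<Sum>j\<in>{1..2*m}. 2*m div p^j - 2*(m div p^j))"
    unfolding t_def by (rule mult_central[OF assms(1)])
  also have "\<dots> \<le> (\<Sum>j\<in>{1..2*m}. if j < t then 1 else 0)"
  proof (rule sum_mono)
    fix j assume "j \<in> {1..2*m}"
    show "2*m div p^j - 2*(m div p^j) \<le> (if j < t then 1 else 0)"
    proof (cases "j < t")
      case True then show ?thesis using div2_le[of m "p^j"] by simp
    next
      case False
      hence "p^t \<le> p^j" using p1 by (intro power_increasing) auto
      hence "2*m < p^j" using big by linarith
      hence "2*m div p^j = 0" by simp
      then show ?thesis by simp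
    qed
  qed
  also have "\<dots> = card ({1..2*m} \<inter> {j. j < t})"
    by (simp add: sum.If_cases)
  also have "\<dots> \<le> card {1..<t}" by (rule card_mono) auto
  also have "\<dots> = t - 1" by simp
  finally show False using t1 by simp
qed

lemma central_zero:
  fixes p m :: nat
  assumes "prime p" "m \<ge> 3" "2*m < 3*p" "p \<le> m"
  shows "multiplicity p ((2*m) choose m) = 0"
proof -
  have p3: "p \<ge> 3" using assms by linarith
  have "(\<Sum>j\<in>{1..2*m}. 2*m div p^j - 2*(m div p^j)) = 0"
  proof (rule sum.neutral, intro ballI)
    fix j assume j: "j \<in> {1..2*m}"
    show "2*m div p^j - 2*(m div p^j) = 0"
    proof (cases "j = 1")
      case True
      have "2*m div p = 2" using assms by (intro div_nat_eqI) auto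
      moreover have "m div p = 1" using assms by (intro div_nat_eqI) auto
      ultimately show ?thesis using True by simp
    next
      case False
      hence "p^2 \<le> p^j" using j prime_gt_1_nat[OF assms(1)] by (intro power_increasing) auto
      moreover have "p^2 > 2*m"
      proof -
        have "3 * p \<le> p * p" using p3 by simp
        thus ?thesis using assms(3) unfolding power2_eq_square by linarith
      qed
      ultimately have "2*m < p^j" by linarith
      then show ?thesis by simp
    qed
  qed
  thus ?thesis using mult_central[OF assms(1)] by simp
qed

lemma central_lower: "4^m \<le> (2*m+1) * ((2*m) choose m)"
proof -
  have "(\<Sum>k\<le>2*m. (2*m) choose k) = (2::nat)^(2*m)" by (rule choose_row_sum)
  also have "(2::nat)^(2*m) = 4^m" by (simp add: power_mult)
  finally have "(4::nat)^m = (\<Sum>k\<le>2*m. (2*m) choose k)" by simp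
  also have "\<dots> \<le> (\<Sum>k\<le>2*m. (2*m) choose m)"
    by (rule sum_mono) (rule binomial_maximum')
  also have "\<dots> = (2*m+1) * ((2*m) choose m)" by simp
  finally show ?thesis .
qed

lemma central_upper:
  fixes m :: nat
  assumes m3: "m \<ge> 3"
  defines "D \<equiv> {p. prime p \<and> m < p \<and> p \<le> 2*m}"
  shows "(2*m) choose m \<le> (2*m)^(nat \<lfloor>sqrt (2*m)\<rfloor> + 1) * 4^(2*m div 3) * (2*m)^(card D)"
proof -
  define C where "C = (2*m) choose m"
  define mu where "mu = (\<lambda>p. multiplicity p C)"
  define PF where "PF = prime_factors C"
  define s where "s = nat \<lfloor>sqrt (2*m)\<rfloor>"
  have Cpos: "C > 0" by (simp add: C_def)
  have fPF: "finite PF" by (simp add: PF_def)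
  have PFpr: "prime p" "mu p \<ge> 1" if "p \<in> PF" for p
    using that Cpos by (auto simp: PF_def mu_def prime_factors_multiplicity)
  have powle: "p ^ mu p \<le> 2*m" if "p \<in> PF" for p
    using central_pow_le[of p m] PFpr[OF that] m3 by (simp add: mu_def C_def)
  define F1 where "F1 = {p\<in>PF. 2 \<le> mu p}"
  define F2 where "F2 = {p\<in>PF. mu p < 2 \<and> p \<le> m}"
  define F3 where "F3 = {p\<in>PF. mu p < 2 \<and> m < p}"
  have split: "PF = F1 \<union> (F2 \<union> F3)" "F1 \<inter> (F2 \<union> F3) = {}" "F2 \<inter> F3 = {}"
    by (auto simp: F1_def F2_def F3_def)
  have fin: "finite F1" "finite F2" "finite F3" using fPF by (auto simp: F1_def F2_def F3_def)
  have "C = (\<Prod>p\<in>PF. p ^ mu p)"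
    using prime_factorization_nat[OF Cpos] by (simp add: PF_def mu_def)
  also have "\<dots> = (\<Prod>p\<in>F1. p ^ mu p) * ((\<Prod>p\<in>F2. p ^ mu p) * (\<Prod>p\<in>F3. p ^ mu p))"
    unfolding split(1) using fin split by (simp add: prod.union_disjoint)
  finally have Ceq: "C = (\<Prod>p\<in>F1. p ^ mu p) * ((\<Prod>p\<in>F2. p ^ mu p) * (\<Prod>p\<in>F3. p ^ mu p))" .
  have F1s: "F1 \<subseteq> {..s}"
  proof
    fix p assume p: "p \<in> F1"
    hence "p ^ 2 \<le> p ^ mu p" using PFpr[of p] prime_ge_1_nat[of p]
      by (intro power_increasing) (auto simp: F1_def)
    also have "\<dots> \<le> 2*m" using powle p by (auto simp: F1_def)
    finally have "real p ^ 2 \<le> real (2*m)" by (simp add: of_nat_power[symmetric] del: of_nat_power)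
    hence "real p \<le> sqrt (real (2*m))" by (simp add: real_le_rsqrt)
    thus "p \<in> {..s}" unfolding s_def by (simp add: le_nat_floor)
  qed
  have P1: "(\<Prod>p\<in>F1. p ^ mu p) \<le> (2*m)^(s+1)"
  proof (rule prod_le_power)
    show "card F1 \<le> s + 1" using card_mono[OF _ F1s] by simp
  qed (use powle m3 in \<open>auto simp: F1_def\<close>)
  have F2s: "F2 \<subseteq> {p. prime p \<and> p \<le> 2*m div 3}"
  proof
    fix p assume p: "p \<in> F2"
    hence pr: "prime p" "mu p \<ge> 1" "p \<le> m" using PFpr by (auto simp: F2_def)
    have "\<not> 2*m < 3*p"
      using central_zero[of p m] pr m3 by (auto simp: mu_def C_def)
    thus "p \<in> {p. prime p \<and> p \<le> 2*m div 3}" using pr by auto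
  qed
  have "(\<Prod>p\<in>F2. p ^ mu p) = (\<Prod>p\<in>F2. p)"
  proof (rule prod.cong[OF refl])
    fix p assume "p \<in> F2"
    hence "mu p = 1" using PFpr[of p] by (auto simp: F2_def)
    thus "p ^ mu p = p" by simp
  qed
  also have "\<dots> \<le> primorial (2*m div 3)"
    unfolding primorial_def
    by (rule dvd_imp_le[OF prod_dvd_prod_subset[OF finite_primes_le F2s]])
       (auto simp: prime_gt_0_nat prod_pos)
  also have "\<dots> \<le> 4^(2*m div 3)" by (rule primorial_le)
  finally have P2: "(\<Prod>p\<in>F2. p ^ mu p) \<le> 4^(2*m div 3)" .
  have F3s: "F3 \<subseteq> D"
  proof
    fix p assume p: "p \<in> F3"
    hence pr: "prime p" "mu p \<ge> 1" using PFpr by (auto simp: F3_def)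
    have "p \<le> p ^ mu p" using pr prime_gt_0_nat[of p]
      using power_increasing[of 1 "mu p" p] by simp
    also have "\<dots> \<le> 2*m" using powle p by (auto simp: F3_def)
    finally show "p \<in> D" using p pr by (auto simp: D_def F3_def)
  qed
  have finD: "finite D" by (rule finite_subset[of _ "{..2*m}"]) (auto simp: D_def)
  have P3: "(\<Prod>p\<in>F3. p ^ mu p) \<le> (2*m)^(card D)"
  proof (rule prod_le_power)
    show "card F3 \<le> card D" by (rule card_mono[OF finD F3s])
  qed (use powle m3 in \<open>auto simp: F3_def\<close>)
  have "C \<le> (2*m)^(s+1) * (4^(2*m div 3) * (2*m)^(card D))"
    unfolding Ceq by (intro mult_mono P1 P2 P3) auto
  thus ?thesis by (simp add: C_def s_def mult.assoc)
qed

lemma asymp_aux: "eventually (\<lambda>x::real. ln (2*x+1) + (sqrt (2*x) + 1) * ln (2*x) \<le> x * ln 4 / 6) at_top"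
  by real_asymp

lemma primes_count:
  "\<exists>M::nat. \<forall>m::nat. m \<ge> M \<longrightarrow> real (card {p::nat. prime p \<and> m < p \<and> p \<le> 2*m}) * ln (2*real m) \<ge> real m * ln 4 / 6"
proof -
  from asymp_aux obtain M0 where M0: "\<And>x. x \<ge> M0 \<Longrightarrow> ln (2*x+1) + (sqrt (2*x) + 1) * ln (2*x) \<le> x * ln 4 / 6"
    by (auto simp: eventually_at_top_linorder)
  show ?thesis
  proof (intro exI[of _ "max 3 (nat \<lceil>M0\<rceil>)"] allI impI)
    fix m :: nat assume m: "max 3 (nat \<lceil>M0\<rceil>) \<le> m"
    define D where "D = {p. prime p \<and> m < p \<and> p \<le> 2*m}"
    define s where "s = nat \<lfloor>sqrt (2*real m)\<rfloor>"
    have m3: "m \<ge> 3" using m by simp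
    have mM: "real m \<ge> M0" using m by linarith
    have "4^m \<le> (2*m+1) * ((2*m) choose m)" by (rule central_lower)
    also have "\<dots> \<le> (2*m+1) * ((2*m)^(s+1) * 4^(2*m div 3) * (2*m)^(card D))"
      using central_upper[OF m3] unfolding D_def s_def by (intro mult_left_mono) auto
    finally have ineq: "real (4^m) \<le> real ((2*m+1) * ((2*m)^(s+1) * 4^(2*m div 3) * (2*m)^(card D)))"
      by (simp only: of_nat_le_iff)
    have pos: "real (2*m) > 0" using m3 by simp
    have Rn: "0 < (2*m+1) * ((2*m)^(s+1) * 4^(2*m div 3) * (2*m)^(card D))"
      using m3 by (intro mult_pos_pos) auto
    have Rpos: "real ((2*m+1) * ((2*m)^(s+1) * 4^(2*m div 3) * (2*m)^(card D))) > 0"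
      using Rn by (simp only: of_nat_0_less_iff)
    have p4: "real (4^m) > 0" by simp
    have "ln (real (4^m)) \<le> ln (real ((2*m+1) * ((2*m)^(s+1) * 4^(2*m div 3) * (2*m)^(card D))))"
      by (subst ln_le_cancel_iff[OF p4 Rpos]) (rule ineq)
    also have "\<dots> = ln (2*real m+1) + (s+1) * ln (2*real m) + (2*m div 3) * ln 4 + card D * ln (2*real m)"
    proof -
      define A where "A = real (2*m+1)"
      define B where "B = (real (2*m))^(s+1)"
      define C where "C = (4::real)^(2*m div 3)"
      define E where "E = (real (2*m))^(card D)"
      have cast: "real ((2*m+1) * ((2*m)^(s+1) * 4^(2*m div 3) * (2*m)^(card D))) = A * ((B * C) * E)"
        unfolding A_def B_def C_def E_def by (simp only: of_nat_mult of_nat_power of_nat_numeral)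
      have a: "A > 0" "B > 0" "C > 0" "E > 0" using pos by (auto simp: A_def B_def C_def E_def)
      have "ln (A * ((B * C) * E)) = ln A + (ln B + ln C + ln E)"
        using a by (simp add: ln_mult)
      moreover have "ln B = (s+1) * ln (2*real m)" unfolding B_def by (subst ln_realpow) (use pos in auto)
      moreover have "ln C = (2*m div 3) * ln 4" unfolding C_def by (subst ln_realpow) auto
      moreover have "ln E = card D * ln (2*real m)" unfolding E_def by (subst ln_realpow) (use pos in auto)
      moreover have "A = 2*m+1" by (simp add: A_def)
      ultimately show ?thesis unfolding cast by simp
    qed
    finally have L: "m * ln 4 \<le> ln (2*real m+1) + (s+1) * ln (2*real m) + (2*m div 3) * ln 4 + card D * ln (2*real m)"
      by (simp add: ln_realpow)
    have s: "real s \<le> sqrt (2*real m)" unfolding s_def by simp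
    have "real (2*m div 3) \<le> 2*m/3" by linarith
    hence "real (2*m div 3) * ln 4 \<le> (2*real m/3) * ln 4" by (intro mult_right_mono) auto
    hence d3: "real (2*m div 3) * ln 4 \<le> (2/3) * (real m * ln 4)" by simp
    have lnpos: "ln (2*real m) \<ge> 0" using m3 by simp
    have f1: "(s+1) * ln (2*real m) \<le> (sqrt (2*real m) + 1) * ln (2*real m)"
      using s lnpos by (intro mult_right_mono) auto
    have f2: "ln (2*real m+1) + (sqrt (2*real m) + 1) * ln (2*real m) \<le> m * ln 4 / 6" using M0[OF mM] by (simp add: algebra_simps)
    show "real (card D) * ln (2*real m) \<ge> m * ln 4 / 6" using L d3 f1 f2 by linarith
  qed
qed

lemma primes_in_finite: "finite (primes_in b n)"
proof (rule finite_subset[of _ "{..nat \<lceil>2 powr (b * real n + 1)\<rceil>}"])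
  show "primes_in b n \<subseteq> {..nat \<lceil>2 powr (b * real n + 1)\<rceil>}"
  proof
    fix p assume "p \<in> primes_in b n"
    hence "real p \<le> 2 powr (b * real n + 1)" by (simp add: primes_in_def)
    also have "\<dots> \<le> real_of_int \<lceil>2 powr (b * real n + 1)\<rceil>" by (rule le_of_int_ceiling)
    finally have "int p \<le> \<lceil>2 powr (b * real n + 1)\<rceil>" by linarith
    thus "p \<in> {..nat \<lceil>2 powr (b * real n + 1)\<rceil>}" by simp
  qed
qed simp

lemma primes_in_count:
  assumes b: "0 < b" "b < 1"
  shows "\<exists>N. \<forall>n\<ge>N. n \<ge> 1 \<and> 2 powr (b * real n) \<ge> 2 \<and>
           real (card (primes_in b n)) \<ge> 2 powr (b * real n) / (12 * real n)"
proof -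
  obtain M :: nat where M: "\<And>m. m \<ge> M \<Longrightarrow> real (card {p::nat. prime p \<and> m < p \<and> p \<le> 2*m}) * ln (2*real m) \<ge> real m * ln 4 / 6"
    using primes_count by blast
  define N where "N = nat \<lceil>(real M + 2) / (b * ln 2)\<rceil> + 1"
  show ?thesis
  proof (intro exI[of _ N] allI impI conjI)
    fix n assume n: "n \<ge> N"
    show n1: "n \<ge> 1" using n by (simp add: N_def)
    define X where "X = 2 powr (b * real n)"
    have "real n \<ge> (real M + 2) / (b * ln 2)" using n unfolding N_def by linarith
    hence "b * ln 2 * real n \<ge> real M + 2" using b by (simp add: field_simps)
    moreover have "X \<ge> 1 + b * real n * ln 2"
    proof -
      have "X = exp (b * real n * ln 2)" by (simp add: X_def powr_def)
      thus ?thesis using exp_ge_add_one_self[of "b * real n * ln 2"] by simp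
    qed
    ultimately have XM: "X \<ge> real M + 3" by (simp add: algebra_simps)
    thus "2 powr (b * real n) \<ge> 2" unfolding X_def by simp
    define m where "m = nat \<lfloor>X\<rfloor>"
    have mX: "real m \<le> X" "X < real m + 1" using XM unfolding m_def by linarith+
    have mM: "m \<ge> M" using mX XM by linarith
    have m2: "m \<ge> 2" using mX XM by linarith
    define D where "D = {p::nat. prime p \<and> m < p \<and> p \<le> 2*m}"
    have DP: "D \<subseteq> primes_in b n"
    proof
      fix p assume "p \<in> D"
      hence p: "prime p" "m + 1 \<le> p" "p \<le> 2*m" by (auto simp: D_def)
      have "X \<le> real p" using p(2) mX by linarith
      moreover have "real p \<le> 2 * X" using p(3) mX by linarith
      moreover have "2 powr (b * real n + 1) = 2 * X" by (simp add: X_def powr_add)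
      ultimately show "p \<in> primes_in b n" using p by (simp add: primes_in_def X_def)
    qed
    have cD: "card D \<le> card (primes_in b n)" by (rule card_mono[OF primes_in_finite DP])
    have A0: "real (card D) * ln (2*real m) \<ge> real m * ln 4 / 6" using M[OF mM] by (simp add: D_def)
    have lnb: "ln (2*real m) \<le> 2 * real n * ln 2"
    proof -
      have "ln (2*real m) \<le> ln (2*X)" using m2 mX by simp
      also have "\<dots> = (b * real n + 1) * ln 2"
        using XM by (simp add: X_def ln_mult ln_powr algebra_simps)
      also have "\<dots> \<le> 2 * real n * ln 2"
      proof -
        have "b * real n \<le> 1 * real n" using b by (intro mult_right_mono) auto
        moreover have "real n \<ge> 1" using n1 by simp
        ultimately have "b * real n + 1 \<le> 2 * real n" by linarith
        thus ?thesis by (intro mult_right_mono) auto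
      qed
      finally show ?thesis .
    qed
    have "real (card D) * ln (2*real m) \<le> real (card D) * (2 * real n * ln 2)"
      by (rule mult_left_mono[OF lnb]) simp
    hence A1: "real (card D) * (2 * real n * ln 2) \<ge> real m * ln 4 / 6" using A0 by linarith
    have l4: "ln (4::real) = 2 * ln 2"
    proof -
      have "(4::real) = 2^2" by simp
      hence "ln (4::real) = ln (2^2)" by simp
      also have "\<dots> = 2 * ln 2" by (subst ln_realpow) auto
      finally show ?thesis .
    qed
    have l2: "ln (2::real) > 0" by simp
    have "real (card D) * real n * (2 * ln 2) \<ge> real m / 6 * (2 * ln 2)"
      using A1 unfolding l4 by (simp add: algebra_simps)
    hence A2: "real (card D) * real n \<ge> real m / 6"
      using l2 by (simp only: mult_le_cancel_right_pos)
    have "real m / (6 * real n) \<le> real (card D)"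
      using A2 n1 by (simp add: divide_le_eq algebra_simps)
    moreover have "X / 2 / (6 * real n) \<le> real m / (6 * real n)"
      using mX XM n1 by (intro divide_right_mono) auto
    moreover have "X / 2 / (6 * real n) = X / (12 * real n)" by simp
    ultimately have "real (card D) \<ge> X / (12 * real n)" by linarith
    thus "real (card (primes_in b n)) \<ge> 2 powr (b * real n) / (12 * real n)"
      using cD unfolding X_def by linarith
  qed
qed

lemma coll_bound:
  fixes x y n :: nat
  assumes b: "0 < b" and n: "n \<ge> 1" and xy: "x \<noteq> y" "x < 2^(4*n)" "y < 2^(4*n)"
  shows "real (card {p\<in>primes_in b n. x mod p = y mod p}) \<le> 4 / b"
proof -
  define Q where "Q = {p\<in>primes_in b n. x mod p = y mod p}"
  define d where "d = (if x \<le> y then y - x else x - y)"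
  define X where "X = 2 powr (b * real n)"
  have d: "d > 0" "d < 2^(4*n)" using xy by (auto simp: d_def)
  have Qd: "\<forall>p\<in>Q. prime p \<and> p dvd d"
    by (auto simp: Q_def d_def primes_in_def mod_eq_dvd_iff_nat intro: mod_eq_dvd_iff_nat[THEN iffD1])
  have finQ: "finite Q" using primes_in_finite by (simp add: Q_def)
  have "\<Prod>Q dvd d" by (rule primes_dvd_prod_dvd[OF d(1) finQ Qd])
  hence "\<Prod>Q \<le> d" using d by (intro dvd_imp_le) auto
  hence "real (\<Prod>Q) \<le> real d" by (simp only: of_nat_le_iff)
  moreover have "real d < 2^(4*n)" using d(2) by (simp only: of_nat_less_numeral_power_cancel_iff)
  ultimately have "real (\<Prod>Q) < 2^(4*n)" by linarith
  moreover have "X ^ card Q \<le> real (\<Prod>Q)"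
  proof -
    have "X ^ card Q = (\<Prod>p\<in>Q. X)" by simp
    also have "\<dots> \<le> (\<Prod>p\<in>Q. real p)"
      by (rule prod_mono) (auto simp: Q_def primes_in_def X_def)
    finally show ?thesis by simp
  qed
  moreover have "X ^ card Q = 2 powr (b * real n * real (card Q))"
    by (simp add: X_def powr_realpow[symmetric] powr_powr)
  moreover have "(2::real)^(4*n) = 2 powr (4 * real n)"
    by (simp add: powr_realpow[symmetric])
  ultimately have "2 powr (b * real n * real (card Q)) < 2 powr (4 * real n)" by linarith
  hence "b * real n * real (card Q) < 4 * real n" by simp
  hence "b * real (card Q) < 4" using n by (simp add: algebra_simps)
  thus ?thesis using b by (simp add: Q_def field_simps)
qed



lemma prob_pk:
  assumes fin: "finite P" and ne: "P \<noteq> {}" and pos: "\<forall>p\<in>P. p > 0"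
  shows "measure_pmf.prob (bind_pmf (pmf_of_set P) (\<lambda>p. map_pmf (\<lambda>k. (p, k)) (pmf_of_set {0..<p}))) E
       = (\<Sum>p\<in>P. real (card {k\<in>{0..<p}. (p,k) \<in> E}) / real p) / real (card P)"
proof -
  have e1: "emeasure (measure_pmf (map_pmf (\<lambda>k. (p, k)) (pmf_of_set {0..<p}))) E
        = ennreal (real (card {k\<in>{0..<p}. (p,k) \<in> E}) / real p)" if "p \<in> P" for p
  proof -
    have "{0..<p} \<noteq> {}" using pos that by auto
    hence "emeasure (measure_pmf (pmf_of_set {0..<p})) ((\<lambda>k. (p, k)) -` E)
        = ennreal (real (card ({0..<p} \<inter> (\<lambda>k. (p, k)) -` E)) / real (card {0..<p}))"
      by (simp add: measure_pmf.emeasure_eq_measure measure_pmf_of_set)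
    moreover have "{0..<p} \<inter> (\<lambda>k. (p, k)) -` E = {k\<in>{0..<p}. (p,k) \<in> E}" by auto
    ultimately show ?thesis by simp
  qed
  have "emeasure (measure_pmf (bind_pmf (pmf_of_set P) (\<lambda>p. map_pmf (\<lambda>k. (p, k)) (pmf_of_set {0..<p})))) E
      = (\<integral>\<^sup>+p. emeasure (measure_pmf (map_pmf (\<lambda>k. (p, k)) (pmf_of_set {0..<p}))) E \<partial>measure_pmf (pmf_of_set P))"
    by simp
  also have "\<dots> = (\<Sum>p\<in>P. emeasure (measure_pmf (map_pmf (\<lambda>k. (p, k)) (pmf_of_set {0..<p}))) E) / of_nat (card P)"
    by (rule nn_integral_pmf_of_set[OF ne fin])
  also have "\<dots> = (\<Sum>p\<in>P. ennreal (real (card {k\<in>{0..<p}. (p,k) \<in> E}) / real p)) / of_nat (card P)"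
    using e1 by simp
  also have "\<dots> = ennreal ((\<Sum>p\<in>P. real (card {k\<in>{0..<p}. (p,k) \<in> E}) / real p) / real (card P))"
  proof -
    have cp: "real (card P) > 0" using fin ne by (simp add: card_gt_0_iff)
    have "(\<Sum>p\<in>P. ennreal (real (card {k\<in>{0..<p}. (p,k) \<in> E}) / real p))
        = ennreal (\<Sum>p\<in>P. real (card {k\<in>{0..<p}. (p,k) \<in> E}) / real p)"
      by (rule sum_ennreal) auto
    moreover have "(of_nat (card P) :: ennreal) = ennreal (real (card P))"
      by (simp add: ennreal_of_nat_eq_real_of_nat)
    ultimately show ?thesis using cp
      by (simp add: divide_ennreal sum_nonneg)
  qed
  finally show ?thesis
    by (subst (asm) measure_pmf.emeasure_eq_measure)
       (subst (asm) ennreal_inj, auto intro!: divide_nonneg_nonneg sum_nonneg)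
qed



lemma cs_sub:
  fixes w :: "nat \<Rightarrow> real"
  assumes "finite K" "H \<subseteq> K"
  shows "(\<Sum>k\<in>H. w k)^2 \<le> real (card H) * (\<Sum>k\<in>K. (w k)^2)"
proof -
  have "(\<Sum>k\<in>H. w k * 1)^2 \<le> (\<Sum>k\<in>H. (w k)^2) * (\<Sum>k\<in>H. 1^2)"
    by (rule Cauchy_Schwarz_ineq_sum)
  also have "\<dots> = real (card H) * (\<Sum>k\<in>H. (w k)^2)" by simp
  also have "\<dots> \<le> real (card H) * (\<Sum>k\<in>K. (w k)^2)"
    by (intro mult_left_mono sum_mono2 assms) auto
  finally show ?thesis by simp
qed

lemma collisions:
  fixes V :: "nat set" and p :: nat
  assumes "finite V" "p > 0"
  shows "(\<Sum>k\<in>{0..<p}. (real (card {v\<in>V. v mod p = k}))^2)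
       = (\<Sum>x\<in>V. \<Sum>y\<in>V. if x mod p = y mod p then 1 else 0)"
proof -
  have w: "real (card {v\<in>V. v mod p = k}) = (\<Sum>x\<in>V. if x mod p = k then 1 else 0)" for k
    using assms(1) by (simp add: sum.If_cases Int_def conj_commute)
  have "(\<Sum>k\<in>{0..<p}. (real (card {v\<in>V. v mod p = k}))^2)
      = (\<Sum>k\<in>{0..<p}. \<Sum>x\<in>V. \<Sum>y\<in>V. (if x mod p = k then 1 else 0) * (if y mod p = k then 1 else 0))"
    by (simp add: w power2_eq_square sum_product)
  also have "\<dots> = (\<Sum>x\<in>V. \<Sum>y\<in>V. \<Sum>k\<in>{0..<p}. (if x mod p = k then 1 else 0) * (if y mod p = k then (1::real) else 0))"
    by (simp add: sum.swap[of _ "{0..<p}"] )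
  also have "\<dots> = (\<Sum>x\<in>V. \<Sum>y\<in>V. if x mod p = y mod p then 1 else 0)"
  proof (intro sum.cong refl)
    fix x y
    have "(\<Sum>k\<in>{0..<p}. (if x mod p = k then 1 else 0) * (if y mod p = k then (1::real) else 0))
        = (\<Sum>k\<in>{0..<p}. if k = x mod p then (if y mod p = x mod p then 1 else 0) else 0)"
      by (intro sum.cong) auto
    also have "\<dots> = (if x mod p = y mod p then 1 else 0)"
      using assms(2) by (subst sum.delta) auto
    finally show "(\<Sum>k\<in>{0..<p}. (if x mod p = k then 1 else 0) * (if y mod p = k then (1::real) else 0))
        = (if x mod p = y mod p then 1 else 0)" .
  qed
  finally show ?thesis .
qed

lemma core:
  fixes P V :: "nat set" and X K Mass :: real and H :: "nat \<Rightarrow> nat set"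
  assumes finP: "finite P" and neP: "P \<noteq> {}" and Pb: "\<forall>p\<in>P. 0 < p \<and> real p \<le> 2*X"
    and finV: "finite V" and neV: "V \<noteq> {}" and K0: "K \<ge> 0"
    and coll: "\<forall>x\<in>V. \<forall>y\<in>V. x \<noteq> y \<longrightarrow> real (card {p\<in>P. x mod p = y mod p}) \<le> K"
    and Hp: "\<forall>p\<in>P. H p \<subseteq> {0..<p} \<and> Mass \<le> (\<Sum>k\<in>H p. real (card {v\<in>V. v mod p = k}))"
    and M0: "Mass \<ge> 0"
  shows "(\<Sum>p\<in>P. real (card (H p)) / real p) / real (card P)
     \<ge> Mass^2 / (8 * X * (real (card V) + K * real (card V)^2 / real (card P)))"
proof -
  define w where "w = (\<lambda>p k. real (card {v\<in>V. v mod p = k}))"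
  define C where "C = (\<lambda>p. \<Sum>k\<in>{0..<p}. (w p k)^2)"
  define cV where "cV = real (card V)"
  define cP where "cP = real (card P)"
  define A where "A = cV + K * cV^2 / cP"
  have cV1: "cV \<ge> 1" using finV neV by (simp add: cV_def Suc_le_eq card_gt_0_iff)
  have cP1: "cP \<ge> 1" using finP neP by (simp add: cP_def Suc_le_eq card_gt_0_iff)
  have Aa: "A \<ge> cV" using K0 cP1 by (simp add: A_def)
  have X0: "X > 0" using Pb neP by fastforce
  have Ceq: "C p = (\<Sum>x\<in>V. \<Sum>y\<in>V. if x mod p = y mod p then 1 else 0)" if "p \<in> P" for p
    unfolding C_def w_def using collisions[OF finV] Pb that by simp
  have Cge: "C p \<ge> cV" if "p \<in> P" for p
  proof -
    have "(\<Sum>x\<in>V. \<Sum>y\<in>V. if x mod p = y mod p then 1 else (0::real)) \<ge> (\<Sum>x\<in>V. 1)"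
    proof (rule sum_mono)
      fix x assume x: "x \<in> V"
      have "(\<Sum>y\<in>V. if x mod p = y mod p then 1 else (0::real)) \<ge> (\<Sum>y\<in>{x}. if x mod p = y mod p then 1 else (0::real))"
        by (rule sum_mono2) (use finV x in auto)
      thus "1 \<le> (\<Sum>y\<in>V. if x mod p = y mod p then 1 else (0::real))" by simp
    qed
    thus ?thesis using Ceq[OF that] by (simp add: cV_def)
  qed
  have "(\<Sum>p\<in>P. C p) = (\<Sum>p\<in>P. \<Sum>x\<in>V. \<Sum>y\<in>V. if x mod p = y mod p then 1 else 0)"
    using Ceq by simp
  also have "\<dots> = (\<Sum>x\<in>V. \<Sum>y\<in>V. \<Sum>p\<in>P. if x mod p = y mod p then 1 else 0)"
    by (simp add: sum.swap[of _ P])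
  also have "\<dots> = (\<Sum>x\<in>V. \<Sum>y\<in>V. real (card {p\<in>P. x mod p = y mod p}))"
    using finP by (simp add: sum.If_cases Int_def conj_commute)
  also have "\<dots> \<le> (\<Sum>x\<in>V. \<Sum>y\<in>V. (if x = y then cP else 0) + K)"
  proof (intro sum_mono)
    fix x y assume "x \<in> V" "y \<in> V"
    show "real (card {p\<in>P. x mod p = y mod p}) \<le> (if x = y then cP else 0) + K"
    proof (cases "x = y")
      case True
      then show ?thesis using K0 by (simp add: cP_def)
    next
      case False
      then show ?thesis using coll \<open>x \<in> V\<close> \<open>y \<in> V\<close> by auto
    qed
  qed
  also have "\<dots> = cV * cP + cV^2 * K"
    using finV by (simp add: sum.distrib sum.delta cV_def power2_eq_square algebra_simps)
  also have "\<dots> = cP * A" using cP1 by (simp add: A_def field_simps power2_eq_square)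
  finally have sumC: "(\<Sum>p\<in>P. C p) \<le> cP * A" .
  define G where "G = {p\<in>P. C p \<le> 2*A}"
  have finG: "finite G" using finP by (simp add: G_def)
  have "real (card (P - G)) * (2*A) \<le> (\<Sum>p\<in>P - G. C p)"
  proof -
    have "(\<Sum>p\<in>P - G. 2*A) \<le> (\<Sum>p\<in>P - G. C p)"
      by (rule sum_mono) (auto simp: G_def)
    thus ?thesis by simp
  qed
  also have "\<dots> \<le> (\<Sum>p\<in>P. C p)"
    by (rule sum_mono2) (use finP Cge cV1 in \<open>force+\<close>)
  also have "\<dots> \<le> cP * A" by (rule sumC)
  finally have "real (card (P - G)) * (2*A) \<le> cP * A" .
  hence PG: "real (card (P - G)) \<le> cP / 2" using Aa cV1 by (simp add: field_simps)
  have "card P = card G + card (P - G)"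
    using finP by (metis G_def card_Diff_subset_Int Diff_Diff_Int Int_commute inf.absorb_iff2 mem_Collect_eq subsetI
        card_Diff_subset finite_subset le_add_diff_inverse card_mono)
  hence Gbig: "real (card G) \<ge> cP / 2" using PG by (simp add: cP_def)
  have per: "real (card (H p)) / real p \<ge> Mass^2 / (4 * A * X)" if "p \<in> G" for p
  proof -
    have pP: "p \<in> P" and Cp: "C p \<le> 2*A" using that by (auto simp: G_def)
    have Cpos: "C p > 0" using Cge[OF pP] cV1 by linarith
    have "Mass^2 \<le> (\<Sum>k\<in>H p. w p k)^2"
      using Hp pP M0 by (intro power_mono) (auto simp: w_def)
    also have "\<dots> \<le> real (card (H p)) * C p"
      unfolding C_def by (rule cs_sub) (use Hp pP in auto)
    finally have m1: "Mass^2 \<le> real (card (H p)) * C p" .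
    have pp: "real p > 0" "real p \<le> 2*X" using Pb pP by auto
    have "Mass^2 / (4*A*X) \<le> real (card (H p)) * C p / (4*A*X)"
      using m1 Aa cV1 X0 by (intro divide_right_mono) auto
    also have "\<dots> \<le> real (card (H p)) / real p"
    proof -
      have "C p * real p \<le> (2*A) * (2*X)" using Cp pp Cpos by (intro mult_mono) auto
      hence "real (card (H p)) * (C p * real p) \<le> real (card (H p)) * ((2*A) * (2*X))"
        by (intro mult_left_mono) auto
      hence "real (card (H p)) * C p * real p \<le> real (card (H p)) * (4*A*X)"
        by (simp add: algebra_simps)
      thus ?thesis using Aa cV1 X0 pp by (simp add: divide_simps)
    qed
    finally show ?thesis .
  qed
  have "cP / 2 * (Mass^2 / (4*A*X)) \<le> real (card G) * (Mass^2 / (4*A*X))"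
    using Gbig Aa cV1 X0 by (intro mult_right_mono) auto
  also have "\<dots> = (\<Sum>p\<in>G. Mass^2 / (4*A*X))" by simp
  also have "\<dots> \<le> (\<Sum>p\<in>G. real (card (H p)) / real p)" by (rule sum_mono) (rule per)
  also have "\<dots> \<le> (\<Sum>p\<in>P. real (card (H p)) / real p)"
    by (rule sum_mono2) (use finP in \<open>auto simp: G_def\<close>)
  finally have fin: "cP / 2 * (Mass^2 / (4*A*X)) \<le> (\<Sum>p\<in>P. real (card (H p)) / real p)" .
  have "Mass^2 / (8 * X * A) = (cP / 2 * (Mass^2 / (4*A*X))) / cP"
    using cP1 by (simp add: field_simps)
  also have "\<dots> \<le> (\<Sum>p\<in>P. real (card (H p)) / real p) / cP"
    using fin cP1 by (intro divide_right_mono) auto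
  finally show ?thesis by (simp add: A_def cV_def cP_def)
qed



lemma den_bound:
  fixes X V m b n :: real
  assumes X: "X > 0" and V: "V > 0" and m: "m \<ge> X / (12*n)" and n: "n \<ge> 1" and b: "0 < b" "b < 1"
  shows "4/b * V^2 / m \<le> 48 * n * V^2 / (b * X)"
proof -
  have "X/(12*n) > 0" using X n by simp
  hence mpos: "m > 0" using m by linarith
  have "X \<le> 12 * n * m" using m n by (simp add: field_simps)
  hence "4 * V^2 * X \<le> 4 * V^2 * (12 * n * m)" using V by (intro mult_left_mono) auto
  thus ?thesis using mpos X b by (simp add: divide_simps algebra_simps)
qed

lemma final1:
  fixes X V m b n :: real
  assumes X: "X > 0" and V: "V \<ge> X" and m: "m \<ge> X / (12*n)" and n: "n \<ge> 1" and b: "0 < b" "b < 1"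
  shows "(V/2)^2 / (8 * X * (V + 4/b * V^2 / m)) \<ge> b / 3072 / n"
proof -
  have Vp: "V > 0" using X V by linarith
  have d1: "4/b * V^2 / m \<le> 48 * n * V^2 / (b * X)" by (rule den_bound) (use assms Vp in auto)
  have "V * X \<le> V * V" using V Vp by (intro mult_left_mono) auto
  also have "V * V \<le> (48 * n / b) * V^2"
  proof -
    have "1 \<le> 48 * n / b" using n b by (simp add: field_simps)
    hence "1 * (V * V) \<le> (48 * n / b) * (V * V)" using Vp by (intro mult_right_mono) auto
    thus ?thesis by (simp add: power2_eq_square)
  qed
  finally have "V * X \<le> (48 * n / b) * V^2" .
  hence d2: "V \<le> 48 * n * V^2 / (b * X)" using X b by (simp add: field_simps)
  define D where "D = V + 4/b * V^2 / m"
  have e96: "96 * n * V^2 / (b * X) = 2 * (48 * n * V^2 / (b * X))" by simp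
  have Dle: "D \<le> 96 * n * V^2 / (b * X)" unfolding e96 D_def mult_2 by (rule add_mono[OF d2 d1])
  have "X/(12*n) > 0" using X n by simp
  hence "m > 0" using m by linarith
  hence "4/b * V^2 / m \<ge> 0" using b by simp
  hence Dpos: "D > 0" using Vp by (simp add: D_def)
  have e1: "8 * X * (96 * n * V^2 / (b * X)) = 768 * n * V^2 / b" using X by simp
  have e2: "(V/2)^2 = V^2/4" by (simp add: power_divide)
  have e3: "V^2/4 / (768 * n * V^2 / b) = b / 3072 / n" using Vp by simp
  have "b / 3072 / n = (V/2)^2 / (8 * X * (96 * n * V^2 / (b * X)))"
    by (simp only: e1 e2 e3)
  also have "\<dots> \<le> (V/2)^2 / (8 * X * D)"
    using Dle Dpos X Vp n b by (intro divide_left_mono mult_left_mono) auto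
  finally show ?thesis by (simp add: D_def)
qed

lemma final2:
  fixes X V m b n :: real
  assumes X: "X > 0" and V: "V > 0" and m: "m \<ge> X / (12*n)" and n: "n \<ge> 1" and b: "0 < b" "b < 1"
  shows "V^2 / (8 * X * (V + 4/b * V^2 / m)) \<ge> b / 3072 * min (1/n) (V/X)"
proof -
  define Y where "Y = V / X"
  have Yp: "Y > 0" using X V by (simp add: Y_def)
  have d1: "4/b * V^2 / m \<le> 48 * n * V^2 / (b * X)" by (rule den_bound) (use assms in auto)
  define D where "D = V + 4/b * V^2 / m"
  have "X/(12*n) > 0" using X n by simp
  hence "m > 0" using m by linarith
  hence "4/b * V^2 / m \<ge> 0" using b by simp
  hence Dpos: "D > 0" using V by (simp add: D_def)
  have Dle: "D \<le> V * (1 + 48 * n * Y / b)" using d1 X by (simp add: D_def Y_def field_simps power2_eq_square)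
  have "48 * n * Y / b \<ge> 0" using Yp n b by simp
  hence pos1: "1 + 48 * n * Y / b > 0" by linarith
  have f1: "V^2 / (8 * X * (V * (1 + 48 * n * Y / b))) \<le> V^2 / (8 * X * D)"
    using Dle Dpos X V Yp n b pos1 by (intro divide_left_mono mult_left_mono) auto
  have f2: "V^2 / (8 * X * (V * (1 + 48 * n * Y / b))) = b * Y / (8 * (b + 48 * n * Y))"
  proof -
    have "1 + 48 * n * Y / b = (b + 48 * n * Y) / b" using b by (simp add: field_simps)
    hence "8 * X * (V * (1 + 48 * n * Y / b)) = (X * V) * (8 * (b + 48 * n * Y) / b)" by simp
    moreover have "V^2 = (X * V) * Y" using X by (simp add: Y_def power2_eq_square)
    moreover have "X * V \<noteq> 0" using X V by simp
    ultimately have "V^2 / (8 * X * (V * (1 + 48 * n * Y / b))) = Y / (8 * (b + 48 * n * Y) / b)"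
      by simp
    also have "\<dots> = b * Y / (8 * (b + 48 * n * Y))" using b by simp
    finally show ?thesis .
  qed
  have f3: "b * Y / (8 * (b + 48 * n * Y)) \<ge> b / 3072 * min (1/n) Y"
  proof (cases "48 * n * Y \<ge> b")
    case True
    have "b / 3072 * min (1/n) Y \<le> b / 3072 * (1/n)" using b by (intro mult_left_mono) auto
    also have "\<dots> \<le> b * Y / (8 * (b + 48 * n * Y))"
      using True b n Yp by (simp add: field_simps)
    finally show ?thesis .
  next
    case False
    have "b / 3072 * min (1/n) Y \<le> b / 3072 * Y" using b by (intro mult_left_mono) auto
    also have "\<dots> \<le> b * Y / (8 * (2 * b))" using b Yp by (simp add: field_simps)
    also have "\<dots> \<le> b * Y / (8 * (b + 48 * n * Y))"
    proof (rule divide_left_mono)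
      have "48 * n * Y \<le> b" using False by simp
      hence "b + 48 * n * Y \<le> 2 * b" by linarith
      thus "8 * (b + 48 * n * Y) \<le> 8 * (2 * b)" by (rule mult_left_mono) simp_all
      show "0 \<le> b * Y" using b Yp by simp
      have "48 * n * Y \<ge> 0" using n Yp by simp
      thus "0 < 8 * (2 * b) * (8 * (b + 48 * n * Y))" using b by (simp add: add_pos_nonneg)
    qed
    finally show ?thesis .
  qed
  have "b / 3072 * min (1/n) Y \<le> V^2 / (8 * X * D)" using f1 f2 f3 by linarith
  thus ?thesis by (simp only: D_def Y_def)
qed

lemma mass_total:
  fixes V :: "nat set" and p :: nat
  assumes "finite V" "p > 0"
  shows "(\<Sum>k\<in>{0..<p}. real (card {v\<in>V. v mod p = k})) = real (card V)"
proof -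
  have w: "real (card {v\<in>V. v mod p = k}) = (\<Sum>x\<in>V. if x mod p = k then 1 else 0)" for k
    using assms(1) by (simp add: sum.If_cases Int_def conj_commute)
  have "(\<Sum>k\<in>{0..<p}. real (card {v\<in>V. v mod p = k}))
      = (\<Sum>k\<in>{0..<p}. \<Sum>x\<in>V. if x mod p = k then 1 else (0::real))"
    by (rule sum.cong[OF refl]) (rule w)
  also have "\<dots> = (\<Sum>x\<in>V. \<Sum>k\<in>{0..<p}. if x mod p = k then 1 else (0::real))"
    by (rule sum.swap)
  also have "\<dots> = (\<Sum>x\<in>V. 1)"
  proof (rule sum.cong[OF refl])
    fix x
    have "(\<Sum>k\<in>{0..<p}. if x mod p = k then 1 else (0::real)) = (\<Sum>k\<in>{0..<p}. if k = x mod p then 1 else (0::real))"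
      by (intro sum.cong) auto
    also have "\<dots> = 1" using assms(2) by (subst sum.delta) auto
    finally show "(\<Sum>k\<in>{0..<p}. if x mod p = k then 1 else (0::real)) = 1" .
  qed
  finally show ?thesis by simp
qed

lemma subset_sums_finite: "finite (subset_sums a n)"
proof -
  have "subset_sums a n = (\<lambda>S. sum a S) ` Pow {1..n}"
    by (auto simp: subset_sums_def)
  thus ?thesis by simp
qed

lemma subset_sums_bound:
  assumes "v \<in> subset_sums a n" "(\<Sum>i=1..n. a i) < 2 ^ (4 * n)"
  shows "v < 2 ^ (4 * n)"
proof -
  obtain S where S: "S \<subseteq> {1..n}" "v = sum a S" using assms(1) by (auto simp: subset_sums_def)
  have "sum a S \<le> sum a {1..n}" by (rule sum_mono2) (use S in auto)
  thus ?thesis using S assms(2) by simp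
qed

lemma main_bound:
  fixes b :: real and n :: nat and a :: "nat \<Rightarrow> nat" and l :: real and V :: "nat set"
  assumes b: "0 < b" "b < 1" and n1: "n \<ge> 1" and X2: "2 powr (b * real n) \<ge> 2"
    and cnt: "real (card (primes_in b n)) \<ge> 2 powr (b * real n) / (12 * real n)"
    and suma: "(\<Sum>i=1..n. a i) < 2 ^ (4 * n)"
    and l: "0 \<le> l" "l \<le> 1"
    and VS: "V \<subseteq> subset_sums a n" and cV: "real (card V) \<ge> 2 powr ((1 - l) * real n)"
  shows "(l \<le> 1 - b \<longrightarrow>
         measure_pmf.prob (pk_pmf b n)
           {(p, k). real (residue_count V p k) \<ge> 2 powr ((1 - l - b) * real n - 2)}
         \<ge> (b/3072) / real n) \<and>
      (l > 1 - b \<longrightarrow>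
         measure_pmf.prob (pk_pmf b n) {(p, k). residue_count V p k \<ge> 1}
         \<ge> (b/3072) * min (1 / real n) (2 powr ((1 - l - b) * real n)))"
proof -
  define P where "P = primes_in b n"
  define X where "X = 2 powr (b * real n)"
  have Xpos: "X > 0" by (simp add: X_def)
  have finP: "finite P" by (simp add: P_def primes_in_finite)
  have "X / (12 * real n) > 0" using Xpos n1 by simp
  hence "card P > 0" using cnt by (simp add: P_def X_def)
  hence neP: "P \<noteq> {}" by auto
  have twoX: "2 powr (b * real n + 1) = 2 * X" by (simp add: X_def powr_add)
  have Pb: "\<forall>p\<in>P. 0 < p \<and> real p \<le> 2*X"
    using twoX by (auto simp: P_def primes_in_def prime_gt_0_nat)
  have finV: "finite V" using finite_subset[OF VS subset_sums_finite] .
  have "(0::real) < 2 powr ((1 - l) * real n)" by simp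
  hence "real (card V) > 0" using cV by linarith
  hence neV: "V \<noteq> {}" by auto
  have Vb: "\<forall>v\<in>V. v < 2^(4*n)" using VS subset_sums_bound[OF _ suma] by auto
  have coll: "\<forall>x\<in>V. \<forall>y\<in>V. x \<noteq> y \<longrightarrow> real (card {p\<in>P. x mod p = y mod p}) \<le> 4/b"
    using coll_bound[OF b(1) n1] Vb by (simp add: P_def)
  have K0: "4/b \<ge> 0" using b by simp
  have pkeq: "pk_pmf b n = bind_pmf (pmf_of_set P) (\<lambda>p. map_pmf (\<lambda>k. (p, k)) (pmf_of_set {0..<p}))"
    by (simp add: pk_pmf_def P_def)
  have prob: "measure_pmf.prob (pk_pmf b n) E
       = (\<Sum>p\<in>P. real (card {k\<in>{0..<p}. (p,k) \<in> E}) / real p) / real (card P)" for E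
    unfolding pkeq by (rule prob_pk[OF finP neP]) (use Pb in auto)
  have rc: "residue_count V p k = card {v\<in>V. v mod p = k}" if "k < p" for p k
    using that by (simp add: residue_count_def)
  have cP: "real (card P) \<ge> X / (12 * real n)" using cnt by (simp add: P_def X_def)
  have nr: "real n \<ge> 1" using n1 by simp
  show ?thesis
  proof (intro conjI impI)
    assume lb: "l \<le> 1 - b"
    define T where "T = 2 powr ((1 - l - b) * real n - 2)"
    define E where "E = {(p, k). real (residue_count V p k) \<ge> T}"
    define H where "H = (\<lambda>p. {k\<in>{0..<p}. (p,k) \<in> E})"
    have TX: "2 * X * T \<le> real (card V) / 2"
    proof -
      have e1: "X * T = 2 powr (b * real n + ((1 - l - b) * real n - 2))"
        unfolding X_def T_def by (rule powr_add[symmetric])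
      have e2: "b * real n + ((1 - l - b) * real n - 2) = (1 - l) * real n - 2"
        by (simp add: algebra_simps)
      have e3: "(2::real) powr ((1 - l) * real n - 2) = 2 powr ((1 - l) * real n) / 2 powr 2"
        by (rule powr_diff)
      have "2 * X * T = 2 * (2 powr ((1 - l) * real n) / 4)"
        using e1 e2 e3 by simp
      thus ?thesis using cV by simp
    qed
    have Hp: "\<forall>p\<in>P. H p \<subseteq> {0..<p} \<and> real (card V) / 2 \<le> (\<Sum>k\<in>H p. real (card {v\<in>V. v mod p = k}))"
    proof (intro ballI conjI)
      fix p assume pP: "p \<in> P"
      show "H p \<subseteq> {0..<p}" by (auto simp: H_def)
      define w where "w = (\<lambda>k. real (card {v\<in>V. v mod p = k}))"
      have tot: "(\<Sum>k\<in>{0..<p}. w k) = real (card V)"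
        unfolding w_def by (rule mass_total[OF finV]) (use Pb pP in auto)
      have "(\<Sum>k\<in>{0..<p} - H p. w k) \<le> (\<Sum>k\<in>{0..<p} - H p. T)"
      proof (rule sum_mono)
        fix k assume "k \<in> {0..<p} - H p"
        hence "k < p" "\<not> T \<le> real (residue_count V p k)" by (auto simp: H_def E_def)
        thus "w k \<le> T" using rc by (simp add: w_def)
      qed
      also have "\<dots> = real (card ({0..<p} - H p)) * T" by simp
      also have "\<dots> \<le> real p * T"
      proof (rule mult_right_mono)
        show "real (card ({0..<p} - H p)) \<le> real p"
          using card_mono[of "{0..<p}" "{0..<p} - H p"] by auto
        show "0 \<le> T" by (simp add: T_def)
      qed
      also have "\<dots> \<le> 2 * X * T"
        using Pb pP by (intro mult_right_mono) (auto simp: T_def)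
      also have "\<dots> \<le> real (card V) / 2" by (rule TX)
      finally have rest: "(\<Sum>k\<in>{0..<p} - H p. w k) \<le> real (card V) / 2" .
      have "(\<Sum>k\<in>{0..<p}. w k) = (\<Sum>k\<in>{0..<p} - H p. w k) + (\<Sum>k\<in>H p. w k)"
        by (subst sum.subset_diff[of "H p"]) (auto simp: H_def)
      thus "real (card V) / 2 \<le> (\<Sum>k\<in>H p. real (card {v\<in>V. v mod p = k}))"
        using tot rest by (simp add: w_def)
    qed
    have "measure_pmf.prob (pk_pmf b n) E = (\<Sum>p\<in>P. real (card (H p)) / real p) / real (card P)"
      by (simp add: prob H_def)
    also have "\<dots> \<ge> (real (card V) / 2)^2 / (8 * X * (real (card V) + 4/b * real (card V)^2 / real (card P)))"
      by (rule core[OF finP neP Pb finV neV K0 coll Hp]) simp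
    moreover have "(real (card V) / 2)^2 / (8 * X * (real (card V) + 4/b * real (card V)^2 / real (card P)))
        \<ge> b / 3072 / real n"
    proof (rule final1[OF Xpos _ cP nr b])
      have "X \<le> 2 powr ((1 - l) * real n)" unfolding X_def
        using lb nr by (intro powr_mono) (auto intro!: mult_right_mono)
      thus "X \<le> real (card V)" using cV by linarith
    qed
    ultimately show "measure_pmf.prob (pk_pmf b n)
           {(p, k). real (residue_count V p k) \<ge> 2 powr ((1 - l - b) * real n - 2)}
         \<ge> (b/3072) / real n" by (simp add: E_def T_def)
  next
    assume lb: "l > 1 - b"
    define E where "E = {(p, k). residue_count V p k \<ge> 1}"
    define H where "H = (\<lambda>p. {k\<in>{0..<p}. (p,k) \<in> E})"
    have Hp: "\<forall>p\<in>P. H p \<subseteq> {0..<p} \<and> real (card V) \<le> (\<Sum>k\<in>H p. real (card {v\<in>V. v mod p = k}))"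
    proof (intro ballI conjI)
      fix p assume pP: "p \<in> P"
      show "H p \<subseteq> {0..<p}" by (auto simp: H_def)
      have "real (card V) = (\<Sum>k\<in>{0..<p}. real (card {v\<in>V. v mod p = k}))"
        by (rule mass_total[OF finV, symmetric]) (use Pb pP in auto)
      also have "\<dots> = (\<Sum>k\<in>H p. real (card {v\<in>V. v mod p = k}))"
      proof (rule sum.mono_neutral_right)
        show "\<forall>k\<in>{0..<p} - H p. real (card {v\<in>V. v mod p = k}) = 0"
        proof
          fix k assume "k \<in> {0..<p} - H p"
          hence "k < p" "\<not> 1 \<le> residue_count V p k" by (auto simp: H_def E_def)
          thus "real (card {v\<in>V. v mod p = k}) = 0" using rc by simp
        qed
      qed (auto simp: H_def)
      finally show "real (card V) \<le> (\<Sum>k\<in>H p. real (card {v\<in>V. v mod p = k}))" by simp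
    qed
    have fa: "measure_pmf.prob (pk_pmf b n) E = (\<Sum>p\<in>P. real (card (H p)) / real p) / real (card P)"
      by (simp add: prob H_def)
    have fb: "(\<Sum>p\<in>P. real (card (H p)) / real p) / real (card P) \<ge> (real (card V))^2 / (8 * X * (real (card V) + 4/b * real (card V)^2 / real (card P)))"
      by (rule core[OF finP neP Pb finV neV K0 coll Hp]) simp
    have fc: "(real (card V))^2 / (8 * X * (real (card V) + 4/b * real (card V)^2 / real (card P)))
        \<ge> b / 3072 * min (1 / real n) (real (card V) / X)"
      by (rule final2[OF Xpos _ cP nr b]) (use neV finV in \<open>simp add: card_gt_0_iff\<close>)
    have fd: "b / 3072 * min (1 / real n) (real (card V) / X) \<ge> b / 3072 * min (1 / real n) (2 powr ((1 - l - b) * real n))"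
    proof -
      have e2: "(1 - l - b) * real n = (1 - l) * real n - b * real n"
        by (simp add: algebra_simps)
      have "2 powr ((1 - l - b) * real n) = 2 powr ((1 - l) * real n) / X"
        unfolding X_def e2 by (rule powr_diff)
      also have "\<dots> \<le> real (card V) / X" using cV Xpos by (simp add: divide_right_mono)
      finally show ?thesis using b by (intro mult_left_mono) auto
    qed
    show "measure_pmf.prob (pk_pmf b n) {(p, k). residue_count V p k \<ge> 1}
         \<ge> (b/3072) * min (1 / real n) (2 powr ((1 - l - b) * real n))"
      using fa fb fc fd unfolding E_def by linarith
  qed
qed

theorem lemma3p9:
  fixes b :: real
  assumes "0 < b" and "b < 1"
  shows "\<exists>c > 0. \<exists>N. \<forall>n \<ge> N. \<forall>(a :: nat \<Rightarrow> nat) (l :: real) (V :: nat set).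
      (\<forall>i\<in>{1..n}. 0 < a i) \<longrightarrow> (\<Sum>i=1..n. a i) < 2 ^ (4 * n) \<longrightarrow>
      0 \<le> l \<longrightarrow> l \<le> 1 \<longrightarrow>
      V \<subseteq> subset_sums a n \<longrightarrow> real (card V) \<ge> 2 powr ((1 - l) * real n) \<longrightarrow>
      (l \<le> 1 - b \<longrightarrow>
         measure_pmf.prob (pk_pmf b n)
           {(p, k). real (residue_count V p k) \<ge> 2 powr ((1 - l - b) * real n - 2)}
         \<ge> c / real n) \<and>
      (l > 1 - b \<longrightarrow>
         measure_pmf.prob (pk_pmf b n) {(p, k). residue_count V p k \<ge> 1}
         \<ge> c * min (1 / real n) (2 powr ((1 - l - b) * real n)))"
proof -
  obtain N0 where N0: "\<And>n. n \<ge> N0 \<Longrightarrow> n \<ge> 1 \<and> 2 powr (b * real n) \<ge> 2 \<and>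
           real (card (primes_in b n)) \<ge> 2 powr (b * real n) / (12 * real n)"
    using primes_in_count[OF assms] by blast
  have main: "\<forall>n \<ge> N0. \<forall>(a :: nat \<Rightarrow> nat) (l :: real) (V :: nat set).
      (\<forall>i\<in>{1..n}. 0 < a i) \<longrightarrow> (\<Sum>i=1..n. a i) < 2 ^ (4 * n) \<longrightarrow>
      0 \<le> l \<longrightarrow> l \<le> 1 \<longrightarrow>
      V \<subseteq> subset_sums a n \<longrightarrow> real (card V) \<ge> 2 powr ((1 - l) * real n) \<longrightarrow>
      (l \<le> 1 - b \<longrightarrow>
         measure_pmf.prob (pk_pmf b n)
           {(p, k). real (residue_count V p k) \<ge> 2 powr ((1 - l - b) * real n - 2)}
         \<ge> (b/3072) / real n) \<and>
      (l > 1 - b \<longrightarrow>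
         measure_pmf.prob (pk_pmf b n) {(p, k). residue_count V p k \<ge> 1}
         \<ge> (b/3072) * min (1 / real n) (2 powr ((1 - l - b) * real n)))"
  proof (intro allI impI)
    fix n a l V
    assume h: "N0 \<le> n" "\<forall>i\<in>{1..n}. 0 < a i" "(\<Sum>i=1..n. a i) < 2 ^ (4 * n)" "0 \<le> l" "l \<le> 1"
      "V \<subseteq> subset_sums a n" "real (card V) \<ge> 2 powr ((1 - l) * real n)"
    have n0: "n \<ge> 1" "2 powr (b * real n) \<ge> 2"
           "real (card (primes_in b n)) \<ge> 2 powr (b * real n) / (12 * real n)"
      using N0[OF h(1)] by auto
    show "(l \<le> 1 - b \<longrightarrow>
         measure_pmf.prob (pk_pmf b n)
           {(p, k). real (residue_count V p k) \<ge> 2 powr ((1 - l - b) * real n - 2)}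
         \<ge> (b/3072) / real n) \<and>
      (l > 1 - b \<longrightarrow>
         measure_pmf.prob (pk_pmf b n) {(p, k). residue_count V p k \<ge> 1}
         \<ge> (b/3072) * min (1 / real n) (2 powr ((1 - l - b) * real n)))"
      by (rule main_bound[OF assms n0 h(3-7)])
  qed
  have "b / 3072 > 0" using assms by simp
  with main show ?thesis by blast
qed


end
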